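(* Let $I,J\in\mathbb{I}_{m,n}$ and $\ast\in\{ss,cc,tot\}$. Then $\bar d^\ast_{V_J}(I)=1$ if $I\le J$, and $\bar d^\ast_{V_J}(I)=0$ otherwise.
   Context: Fix a field $K$. For integers $m,n\ge1$, $G_{m,n}$ is the equioriented commutative $m\times n$ grid: the quiver with vertex set $\{(i,j):1\le i\le m,\ 1\le j\le n\}$ and arrows $(i,j)\to(i,j+1)$ and $(i,j)\to(i+1,j)$, bound by all commutativity relations; $\mathrm{rep}\,G_{m,n}$ is its category of finite-dimensional representations over $K$ satisfying the relations. An interval of $G_{m,n}$ is a nonempty full subquiver $I$ which is connected (as an undirected graph) and convex (whenever $x,y\in I_0$ and there are paths $x\to z$, $z\to y$ in $G_{m,n}$, then $z\in I_0$); $\mathbb{I}_{m,n}$ is the set of intervals ordered by inclusion of vertex sets. The interval representation $V_I$ has $K$ at vertices of $I$, $0$ elsewhere, identity maps on arrows inside $I$ and zero maps otherwise. Essential vertices: $I^{ss}_0$ is the set of sources and sinks of the quiver $I$; $I^{cc}_0=I_0\cap(\mathrm{pr}_1(I^{ss}_0)\times\mathrm{pr}_2(I^{ss}_0))$ with $\mathrm{pr}_1,\mathrm{pr}_2$ coordinate projections; $I^{tot}_0=I_0$. Let $KG_{m,n}$ be the $K$-linear category whose objects are the vertices and whose morphisms are $K$-linear combinations of paths modulo the commutativity relations; representations of $G_{m,n}$ are $K$-linear functors $KG_{m,n}\to\mathrm{vect}_K$. For $\ast\in\{ss,cc,tot\}$, $\mathcal{C}^\ast_I$ is the full subcategory of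 $KG_{m,n}$ on $I^\ast_0$, and the compression of $M$ is the restriction $M^\ast_I:=M|_{\mathcal{C}^\ast_I}$. The compressed multiplicity $\bar d^\ast_M(I)$ is the multiplicity of the indecomposable $(V_I)^\ast_I$ as a direct summand of $M^\ast_I$ (Krull–Schmidt). *)

theory Defs
  imports "Jordan_Normal_Form.Matrix"
begin

definition grid :: "nat \<Rightarrow> nat \<Rightarrow> (nat \<times> nat) set" where
  "grid m n = {(i, j). 1 \<le> i \<and> i \<le> m \<and> 1 \<le> j \<and> j \<le> n}"

definition arrows :: "nat \<Rightarrow> nat \<Rightarrow> ((nat \<times> nat) \<times> (nat \<times> nat)) set" where
  "arrows m n = {(x, y). x \<in> grid m n \<and> y \<in> grid m n \<and>
      ((fst y = fst x \<and> snd y = Suc (snd x)) \<or> (fst y = Suc (fst x) \<and> snd y = snd x))}"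

definition reach :: "nat \<Rightarrow> nat \<Rightarrow> nat \<times> nat \<Rightarrow> nat \<times> nat \<Rightarrow> bool" where
  "reach m n x y \<longleftrightarrow> x \<in> grid m n \<and> (x, y) \<in> (arrows m n)\<^sup>*"

section \<open>Intervals (identified with their vertex sets; full subquivers)\<close>

definition is_interval :: "nat \<Rightarrow> nat \<Rightarrow> (nat \<times> nat) set \<Rightarrow> bool" where
  "is_interval m n I \<longleftrightarrow>
     I \<noteq> {} \<and> I \<subseteq> grid m n \<and>
     (\<forall>x\<in>I. \<forall>y\<in>I. (x, y) \<in> ((arrows m n \<inter> (I \<times> I)) \<union> (arrows m n \<inter> (I \<times> I))\<inverse>)\<^sup>*) \<and>
     (\<forall>x\<in>I. \<forall>y\<in>I. \<forall>z. reach m n x z \<and> reach m n z y \<longrightarrow> z \<in> I)"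

definition sources_sinks :: "nat \<Rightarrow> nat \<Rightarrow> (nat \<times> nat) set \<Rightarrow> (nat \<times> nat) set" where
  "sources_sinks m n I =
     {x \<in> I. \<not> (\<exists>y\<in>I. (y, x) \<in> arrows m n)} \<union> {x \<in> I. \<not> (\<exists>y\<in>I. (x, y) \<in> arrows m n)}"

datatype ess = SS | CC | TOT

definition ess_vertices :: "nat \<Rightarrow> nat \<Rightarrow> ess \<Rightarrow> (nat \<times> nat) set \<Rightarrow> (nat \<times> nat) set" where
  "ess_vertices m n st I = (case st of
       SS \<Rightarrow> sources_sinks m n I
     | CC \<Rightarrow> I \<inter> (fst ` sources_sinks m n I \<times> snd ` sources_sinks m n I)
     | TOT \<Rightarrow> I)"

text \<open>Hom(x,y) in KG_{m,n} is K (all paths equal modulo commutativity) if there is a path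
  x -> y and 0 otherwise. So a K-linear functor on the full subcategory on S is given by
  vector spaces K^{dimv x} (x in S) and matrices mapv x y for x, y in S with a path x -> y,
  satisfying functoriality.\<close>

record 'k rep =
  dimv :: "nat \<times> nat \<Rightarrow> nat"
  mapv :: "nat \<times> nat \<Rightarrow> nat \<times> nat \<Rightarrow> 'k mat"

definition is_rep :: "nat \<Rightarrow> nat \<Rightarrow> (nat \<times> nat) set \<Rightarrow> ('k::field) rep \<Rightarrow> bool" where
  "is_rep m n S M \<longleftrightarrow>
     (\<forall>x\<in>S. mapv M x x = 1\<^sub>m (dimv M x)) \<and>
     (\<forall>x\<in>S. \<forall>y\<in>S. reach m n x y \<longrightarrow> mapv M x y \<in> carrier_mat (dimv M y) (dimv M x)) \<and>
     (\<forall>x\<in>S. \<forall>y\<in>S. \<forall>z\<in>S. reach m n x y \<and> reach m n y z \<longrightarrow>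
        mapv M y z * mapv M x y = mapv M x z)"

definition rep_iso :: "nat \<Rightarrow> nat \<Rightarrow> (nat \<times> nat) set \<Rightarrow> ('k::field) rep \<Rightarrow> 'k rep \<Rightarrow> bool" where
  "rep_iso m n S M N \<longleftrightarrow>
     (\<exists>f. (\<forall>x\<in>S. f x \<in> carrier_mat (dimv N x) (dimv M x) \<and> invertible_mat (f x)) \<and>
          (\<forall>x\<in>S. \<forall>y\<in>S. reach m n x y \<longrightarrow> f y * mapv M x y = mapv N x y * f x))"

definition zero_rep :: "('k::field) rep" where
  "zero_rep = \<lparr>dimv = (\<lambda>_. 0), mapv = (\<lambda>_ _. 0\<^sub>m 0 0)\<rparr>"

definition dsum2 :: "('k::field) rep \<Rightarrow> 'k rep \<Rightarrow> 'k rep" where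
  "dsum2 A B = \<lparr>dimv = (\<lambda>x. dimv A x + dimv B x),
     mapv = (\<lambda>x y. four_block_mat (mapv A x y) (0\<^sub>m (dimv A y) (dimv B x))
                                   (0\<^sub>m (dimv B y) (dimv A x)) (mapv B x y))\<rparr>"

definition dsum :: "('k::field) rep list \<Rightarrow> 'k rep" where
  "dsum Ns = foldr dsum2 Ns zero_rep"

definition nonzero_rep :: "(nat \<times> nat) set \<Rightarrow> ('k::field) rep \<Rightarrow> bool" where
  "nonzero_rep S M \<longleftrightarrow> (\<exists>x\<in>S. dimv M x \<noteq> 0)"

definition indecomposable :: "nat \<Rightarrow> nat \<Rightarrow> (nat \<times> nat) set \<Rightarrow> ('k::field) rep \<Rightarrow> bool" where
  "indecomposable m n S M \<longleftrightarrow> is_rep m n S M \<and> nonzero_rep S M \<and>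
     \<not> (\<exists>A B. is_rep m n S A \<and> is_rep m n S B \<and> nonzero_rep S A \<and> nonzero_rep S B \<and>
             rep_iso m n S M (dsum2 A B))"

text \<open>Multiplicity of N as a direct summand of M: the number of summands isomorphic to N
  in a decomposition of M into indecomposables (well defined by Krull--Schmidt).\<close>
definition multiplicity_rep :: "nat \<Rightarrow> nat \<Rightarrow> (nat \<times> nat) set \<Rightarrow> ('k::field) rep \<Rightarrow> 'k rep \<Rightarrow> nat" where
  "multiplicity_rep m n S M N = (THE k. \<exists>Ns. (\<forall>L\<in>set Ns. indecomposable m n S L) \<and>
       rep_iso m n S M (dsum Ns) \<and> length (filter (\<lambda>L. rep_iso m n S L N) Ns) = k)"

definition interval_rep :: "(nat \<times> nat) set \<Rightarrow> ('k::field) rep" where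
  "interval_rep I = \<lparr>dimv = (\<lambda>x. if x \<in> I then 1 else 0),
     mapv = (\<lambda>x y. if x \<in> I \<and> y \<in> I then 1\<^sub>m 1
                   else 0\<^sub>m (if y \<in> I then 1 else 0) (if x \<in> I then 1 else 0))\<rparr>"

text \<open>Compressed multiplicity d^*_M(I): multiplicity of (V_I)^*_I in M^*_I, the compressions
  being restrictions to the full subcategory on I^*_0.\<close>
definition compressed_mult :: "nat \<Rightarrow> nat \<Rightarrow> ess \<Rightarrow> ('k::field) rep \<Rightarrow> (nat \<times> nat) set \<Rightarrow> nat" where
  "compressed_mult m n st M I =
     multiplicity_rep m n (ess_vertices m n st I) M (interval_rep I)"

end

theory Submission
  imports Defs
begin


definition carr :: "nat \<Rightarrow> nat \<Rightarrow> (nat \<times> nat) set \<Rightarrow> ('k::field) rep \<Rightarrow> bool" where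
  "carr m n S M \<longleftrightarrow> (\<forall>x\<in>S. \<forall>y\<in>S. reach m n x y \<longrightarrow> mapv M x y \<in> carrier_mat (dimv M y) (dimv M x))"

lemma is_rep_carr: "is_rep m n S M \<Longrightarrow> carr m n S M"
  unfolding is_rep_def carr_def by blast

lemma carrD: "carr m n S M \<Longrightarrow> x \<in> S \<Longrightarrow> y \<in> S \<Longrightarrow> reach m n x y \<Longrightarrow> mapv M x y \<in> carrier_mat (dimv M y) (dimv M x)"
  unfolding carr_def by blast

lemma inv_ex:
  fixes A :: "'k::field mat"
  assumes "invertible_mat A" "A \<in> carrier_mat k k"
  shows "\<exists>B \<in> carrier_mat k k. A * B = 1\<^sub>m k \<and> B * A = 1\<^sub>m k"
proof -
  from assms obtain B where B: "inverts_mat A B" "inverts_mat B A" unfolding invertible_mat_def by blast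
  have 1: "A * B = 1\<^sub>m k" using B assms(2) unfolding inverts_mat_def by auto
  have "dim_col B = k" using arg_cong[OF 1, of dim_col] by simp
  moreover have "dim_row B = k" using B(2) assms(2) unfolding inverts_mat_def
    by (metis index_mult_mat(3) index_one_mat(3) carrier_matD(2))
  ultimately have "B \<in> carrier_mat k k" by auto
  moreover have "B * A = 1\<^sub>m k" using B(2) \<open>dim_row B = k\<close> unfolding inverts_mat_def by auto
  ultimately show ?thesis using 1 by blast
qed

lemma invertible_of:
  fixes A :: "'k::field mat"
  assumes "A \<in> carrier_mat k k" "B \<in> carrier_mat k k" "A * B = 1\<^sub>m k" "B * A = 1\<^sub>m k"
  shows "invertible_mat A"
  using assms unfolding invertible_mat_def inverts_mat_def square_mat.simps by auto

lemma inv_mult: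
  fixes A :: "'k::field mat"
  assumes "invertible_mat A" "A \<in> carrier_mat k k" "invertible_mat B" "B \<in> carrier_mat k k"
  shows "invertible_mat (B * A)"
proof -
  obtain A' where A': "A' \<in> carrier_mat k k" "A * A' = 1\<^sub>m k" "A' * A = 1\<^sub>m k" using inv_ex[OF assms(1,2)] by blast
  obtain B' where B': "B' \<in> carrier_mat k k" "B * B' = 1\<^sub>m k" "B' * B = 1\<^sub>m k" using inv_ex[OF assms(3,4)] by blast
  have cBA: "B * A \<in> carrier_mat k k" "A' * B' \<in> carrier_mat k k" using A' B' assms by auto
  have e1: "(B * A) * (A' * B') = B * (A * (A' * B'))" by (rule assoc_mult_mat[OF assms(4,2) cBA(2)])
  have e2: "A * (A' * B') = (A * A') * B'" by (rule assoc_mult_mat[OF assms(2) A'(1) B'(1), symmetric])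
  have 1: "(B * A) * (A' * B') = 1\<^sub>m k" unfolding e1 e2 using A' B' assms by simp
  have e3: "(A' * B') * (B * A) = A' * (B' * (B * A))" by (rule assoc_mult_mat[OF A'(1) B'(1) cBA(1)])
  have e4: "B' * (B * A) = (B' * B) * A" by (rule assoc_mult_mat[OF B'(1) assms(4,2), symmetric])
  have 2: "(A' * B') * (B * A) = 1\<^sub>m k" unfolding e3 e4 using A' B' assms by simp
  show ?thesis by (rule invertible_of[OF _ _ 1 2]) (use A' B' assms in auto)
qed

lemma iso_dim: "rep_iso m n S M N \<Longrightarrow> x \<in> S \<Longrightarrow> dimv N x = dimv M x"
  unfolding rep_iso_def invertible_mat_def square_mat.simps by (metis carrier_matD(1) carrier_matD(2))

lemma iso_eq:
  assumes "carr m n S M" "\<forall>x\<in>S. dimv N x = dimv M x"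
    "\<forall>x\<in>S. \<forall>y\<in>S. reach m n x y \<longrightarrow> mapv N x y = mapv M x y"
  shows "rep_iso m n S M N"
  unfolding rep_iso_def
proof (intro exI[of _ "\<lambda>x. 1\<^sub>m (dimv M x)"] conjI ballI impI)
  fix x assume x: "x \<in> S"
  show "1\<^sub>m (dimv M x) \<in> carrier_mat (dimv N x) (dimv M x)" using assms(2) x by auto
  show "invertible_mat (1\<^sub>m (dimv M x) :: 'a mat)"
    by (rule invertible_of[of _ "dimv M x" "1\<^sub>m (dimv M x)"]) auto
next
  fix x y assume "x \<in> S" "y \<in> S" "reach m n x y"
  then have c: "mapv M x y \<in> carrier_mat (dimv M y) (dimv M x)" using carrD[OF assms(1)] by blast
  have "mapv N x y = mapv M x y" using assms(3) \<open>x\<in>S\<close> \<open>y\<in>S\<close> \<open>reach m n x y\<close> by blast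
  then show "1\<^sub>m (dimv M y) * mapv M x y = mapv N x y * 1\<^sub>m (dimv M x)"
    using c by simp
qed

lemma iso_trans:
  assumes "carr m n S A" "carr m n S B" "rep_iso m n S A B" "rep_iso m n S B C" "carr m n S C"
  shows "rep_iso m n S A C"
proof -
  obtain f where f: "\<forall>x\<in>S. f x \<in> carrier_mat (dimv B x) (dimv A x) \<and> invertible_mat (f x)"
    "\<forall>x\<in>S. \<forall>y\<in>S. reach m n x y \<longrightarrow> f y * mapv A x y = mapv B x y * f x"
    using assms(3) unfolding rep_iso_def by blast
  obtain g where g: "\<forall>x\<in>S. g x \<in> carrier_mat (dimv C x) (dimv B x) \<and> invertible_mat (g x)"
    "\<forall>x\<in>S. \<forall>y\<in>S. reach m n x y \<longrightarrow> g y * mapv B x y = mapv C x y * g x"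
    using assms(4) unfolding rep_iso_def by blast
  have dB: "\<And>x. x \<in> S \<Longrightarrow> dimv B x = dimv A x" using iso_dim[OF assms(3)] .
  have dC: "\<And>x. x \<in> S \<Longrightarrow> dimv C x = dimv B x" using iso_dim[OF assms(4)] .
  show ?thesis unfolding rep_iso_def
  proof (intro exI[of _ "\<lambda>x. g x * f x"] conjI ballI impI)
    fix x assume x: "x \<in> S"
    show "g x * f x \<in> carrier_mat (dimv C x) (dimv A x)" using f g x by auto
    show "invertible_mat (g x * f x)"
      using inv_mult[of "f x" "dimv A x" "g x"] f g x dB dC by auto
  next
    fix x y assume xy: "x \<in> S" "y \<in> S" "reach m n x y"
    have cA: "mapv A x y \<in> carrier_mat (dimv A y) (dimv A x)" using carrD[OF assms(1) xy] .
    have cB: "mapv B x y \<in> carrier_mat (dimv B y) (dimv B x)" using carrD[OF assms(2) xy] .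
    have cf: "f x \<in> carrier_mat (dimv A x) (dimv A x)" "f y \<in> carrier_mat (dimv A y) (dimv A y)"
      using f xy dB by auto
    have cg: "g x \<in> carrier_mat (dimv A x) (dimv A x)" "g y \<in> carrier_mat (dimv A y) (dimv A y)"
      using g xy dB dC by auto
    have cC: "mapv C x y \<in> carrier_mat (dimv A y) (dimv A x)" using carrD[OF assms(5) xy] dB dC xy by simp
    have cB': "mapv B x y \<in> carrier_mat (dimv A y) (dimv A x)" using cB dB xy by simp
    have "g y * f y * mapv A x y = g y * (f y * mapv A x y)"
      by (rule assoc_mult_mat[OF cg(2) cf(2) cA])
    also have "\<dots> = g y * (mapv B x y * f x)" using f xy by auto
    also have "\<dots> = (g y * mapv B x y) * f x" by (rule assoc_mult_mat[OF cg(2) cB' cf(1), symmetric])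
    also have "\<dots> = (mapv C x y * g x) * f x" using g xy by auto
    also have "\<dots> = mapv C x y * (g x * f x)" 
      by (rule assoc_mult_mat[OF cC cg(1) cf(1)])
    finally show "g y * f y * mapv A x y = mapv C x y * (g x * f x)" .
  qed
qed



lemma iso_sym:
  assumes "carr m n S A" "carr m n S B" "rep_iso m n S A B"
  shows "rep_iso m n S B A"
proof -
  obtain f where f: "\<forall>x\<in>S. f x \<in> carrier_mat (dimv B x) (dimv A x) \<and> invertible_mat (f x)"
    "\<forall>x\<in>S. \<forall>y\<in>S. reach m n x y \<longrightarrow> f y * mapv A x y = mapv B x y * f x"
    using assms(3) unfolding rep_iso_def by blast
  have dB: "\<And>x. x \<in> S \<Longrightarrow> dimv B x = dimv A x" using iso_dim[OF assms(3)] .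
  define g where "g x = (SOME h. h \<in> carrier_mat (dimv A x) (dimv A x) \<and> f x * h = 1\<^sub>m (dimv A x) \<and> h * f x = 1\<^sub>m (dimv A x))" for x
  have g: "g x \<in> carrier_mat (dimv A x) (dimv A x) \<and> f x * g x = 1\<^sub>m (dimv A x) \<and> g x * f x = 1\<^sub>m (dimv A x)" if "x \<in> S" for x
  proof -
    have "\<exists>h \<in> carrier_mat (dimv A x) (dimv A x). f x * h = 1\<^sub>m (dimv A x) \<and> h * f x = 1\<^sub>m (dimv A x)"
      using inv_ex[of "f x" "dimv A x"] f that dB by auto
    then show ?thesis unfolding g_def by (rule bexE) (rule someI, blast)
  qed
  show ?thesis unfolding rep_iso_def
  proof (intro exI[of _ g] conjI ballI impI)
    fix x assume x: "x \<in> S"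
    show "g x \<in> carrier_mat (dimv A x) (dimv B x)" using g[OF x] dB[OF x] by simp
    show "invertible_mat (g x)" using g[OF x] f x dB[OF x]
      by (intro invertible_of[of _ "dimv A x" "f x"]) auto
  next
    fix x y assume xy: "x \<in> S" "y \<in> S" "reach m n x y"
    have cA: "mapv A x y \<in> carrier_mat (dimv A y) (dimv A x)" using carrD[OF assms(1) xy] .
    have cB: "mapv B x y \<in> carrier_mat (dimv A y) (dimv A x)" using carrD[OF assms(2) xy] dB xy by simp
    have cf: "f x \<in> carrier_mat (dimv A x) (dimv A x)" "f y \<in> carrier_mat (dimv A y) (dimv A y)"
      using f xy dB by auto
    note gx = g[OF xy(1)] and gy = g[OF xy(2)]
    have a1: "g y * mapv B x y * f x = g y * (mapv B x y * f x)"
      using assoc_mult_mat[of "g y" "dimv A y" "dimv A y" "mapv B x y" "dimv A x" "f x" "dimv A x"] gx gy cB cf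
      by auto
    have "g y * mapv B x y = g y * mapv B x y * (f x * g x)" using gx gy cB by simp
    also have "\<dots> = (g y * mapv B x y * f x) * g x"
      using assoc_mult_mat[of "g y * mapv B x y" "dimv A y" "dimv A x" "f x" "dimv A x" "g x" "dimv A x"] gx gy cB cf
      by auto
    also have "\<dots> = g y * (mapv B x y * f x) * g x" using a1 by simp
    also have "\<dots> = g y * (f y * mapv A x y) * g x" using f xy by auto
    also have "\<dots> = mapv A x y * g x"
    proof -
      have a2: "g y * (f y * mapv A x y) = (g y * f y) * mapv A x y"
        using assoc_mult_mat[of "g y" "dimv A y" "dimv A y" "f y" "dimv A y" "mapv A x y" "dimv A x"] gy cA cf
        by auto
      show ?thesis unfolding a2 using gy cA by simp
    qed
    finally show "g y * mapv B x y = mapv A x y * g x" .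
  qed
qed

lemma four_block_zero_right:
  "X \<in> carrier_mat a b \<Longrightarrow> four_block_mat X (0\<^sub>m a 0) (0\<^sub>m 0 b) (0\<^sub>m 0 0) = X"
  by (rule eq_matI) auto

lemma four_block_zero_left:
  "X \<in> carrier_mat a b \<Longrightarrow> four_block_mat (0\<^sub>m 0 0) (0\<^sub>m 0 b) (0\<^sub>m a 0) X = X"
  by (rule eq_matI) auto

lemma dimv_dsum2[simp]: "dimv (dsum2 A B) x = dimv A x + dimv B x"
  unfolding dsum2_def by simp

lemma mapv_dsum2: "mapv (dsum2 A B) x y = four_block_mat (mapv A x y) (0\<^sub>m (dimv A y) (dimv B x))
                                   (0\<^sub>m (dimv B y) (dimv A x)) (mapv B x y)"
  unfolding dsum2_def by simp

lemma dimv_zero[simp]: "dimv zero_rep x = 0" and mapv_zero[simp]: "mapv zero_rep x y = 0\<^sub>m 0 0"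
  unfolding zero_rep_def by auto

lemma dim_dsum: "dimv (dsum Ns) x = sum_list (map (\<lambda>L. dimv L x) Ns)"
  unfolding dsum_def by (induct Ns) auto

lemma dsum_Cons[simp]: "dsum (L # Ns) = dsum2 L (dsum Ns)" and dsum_Nil[simp]: "dsum [] = zero_rep"
  unfolding dsum_def by auto

lemma carr_dsum2: "carr m n S A \<Longrightarrow> carr m n S B \<Longrightarrow> carr m n S (dsum2 A B)"
  unfolding carr_def mapv_dsum2 by (auto intro!: four_block_carrier_mat)

lemma carr_zero: "carr m n S zero_rep" unfolding carr_def by auto

lemma one_zero_mat: "(1\<^sub>m 0 :: 'a::field mat) = 0\<^sub>m 0 0" by (rule eq_matI) auto

lemma is_rep_zero: "is_rep m n S (zero_rep :: 'a::field rep)"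
  unfolding is_rep_def by (auto simp: one_zero_mat)

lemma is_rep_dsum2:
  assumes A: "is_rep m n S A" and B: "is_rep m n S B"
  shows "is_rep m n S (dsum2 A B)"
  unfolding is_rep_def
proof (intro conjI ballI impI)
  fix x assume "x \<in> S"
  then show "mapv (dsum2 A B) x x = 1\<^sub>m (dimv (dsum2 A B) x)"
    using A B unfolding is_rep_def mapv_dsum2 by simp
next
  fix x y assume "x \<in> S" "y \<in> S" "reach m n x y"
  then show "mapv (dsum2 A B) x y \<in> carrier_mat (dimv (dsum2 A B) y) (dimv (dsum2 A B) x)"
    using carr_dsum2[OF is_rep_carr[OF A] is_rep_carr[OF B]] unfolding carr_def by blast
next
  fix x y z assume xyz: "x \<in> S" "y \<in> S" "z \<in> S" and r: "reach m n x y \<and> reach m n y z"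
  have rxz: "reach m n x z" using r unfolding reach_def by auto
  have cA: "mapv A x y \<in> carrier_mat (dimv A y) (dimv A x)" "mapv A y z \<in> carrier_mat (dimv A z) (dimv A y)"
    using A xyz r unfolding is_rep_def by auto
  have cB: "mapv B x y \<in> carrier_mat (dimv B y) (dimv B x)" "mapv B y z \<in> carrier_mat (dimv B z) (dimv B y)"
    using B xyz r unfolding is_rep_def by auto
  have cA3: "mapv A x z \<in> carrier_mat (dimv A z) (dimv A x)" using A xyz rxz unfolding is_rep_def by auto
  have cB3: "mapv B x z \<in> carrier_mat (dimv B z) (dimv B x)" using B xyz rxz unfolding is_rep_def by auto
  have eA: "mapv A y z * mapv A x y = mapv A x z" using A xyz r unfolding is_rep_def by blast
  have eB: "mapv B y z * mapv B x y = mapv B x z" using B xyz r unfolding is_rep_def by blast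
  show "mapv (dsum2 A B) y z * mapv (dsum2 A B) x y = mapv (dsum2 A B) x z"
    unfolding mapv_dsum2
    by (subst mult_four_block_mat[OF cA(2) _ _ cB(2) cA(1) _ _ cB(1)]) (use cA cB eA eB cA3 cB3 in auto)
qed

lemma is_rep_dsum: "\<forall>L\<in>set Ns. is_rep m n S L \<Longrightarrow> is_rep m n S (dsum Ns)"
  by (induct Ns) (auto simp: is_rep_zero is_rep_dsum2)

lemma carr_dsum: "\<forall>L\<in>set Ns. carr m n S L \<Longrightarrow> carr m n S (dsum Ns)"
  by (induct Ns) (auto simp: carr_zero carr_dsum2)

lemma iso_zero_right: "carr m n S A \<Longrightarrow> rep_iso m n S A (dsum2 A zero_rep)"
  by (rule iso_eq) (auto simp: mapv_dsum2 four_block_zero_right carr_def)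

lemma iso_zero_right': "carr m n S A \<Longrightarrow> rep_iso m n S (dsum2 A zero_rep) A"
  by (rule iso_eq) (auto simp: mapv_dsum2 four_block_zero_right carr_def)

lemma iso_zero_left': "carr m n S A \<Longrightarrow> rep_iso m n S (dsum2 zero_rep A) A"
  by (rule iso_eq) (auto simp: mapv_dsum2 four_block_zero_left carr_def)

lemma iso_assoc:
  assumes "carr m n S A" "carr m n S B" "carr m n S C"
  shows "rep_iso m n S (dsum2 (dsum2 A B) C) (dsum2 A (dsum2 B C))"
proof (rule iso_eq)
  show "carr m n S (dsum2 (dsum2 A B) C)" using assms by (intro carr_dsum2)
  show "\<forall>x\<in>S. dimv (dsum2 A (dsum2 B C)) x = dimv (dsum2 (dsum2 A B) C) x" by simp
  show "\<forall>x\<in>S. \<forall>y\<in>S. reach m n x y \<longrightarrow> mapv (dsum2 A (dsum2 B C)) x y = mapv (dsum2 (dsum2 A B) C) x y"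
  proof (intro ballI impI)
    fix x y assume xy: "x \<in> S" "y \<in> S" "reach m n x y"
    have c: "mapv A x y \<in> carrier_mat (dimv A y) (dimv A x)" "mapv B x y \<in> carrier_mat (dimv B y) (dimv B x)"
      "mapv C x y \<in> carrier_mat (dimv C y) (dimv C x)" using assms xy unfolding carr_def by auto
    show "mapv (dsum2 A (dsum2 B C)) x y = mapv (dsum2 (dsum2 A B) C) x y"
      unfolding mapv_dsum2 dimv_dsum2
      using assoc_four_block_mat[of "mapv A x y" "mapv B x y" "mapv C x y"] c by auto
  qed
qed



lemma block_inv:
  fixes F G :: "'k::field mat"
  assumes "F \<in> carrier_mat a a" "invertible_mat F" "G \<in> carrier_mat b b" "invertible_mat G"
  shows "invertible_mat (four_block_mat F (0\<^sub>m a b) (0\<^sub>m b a) G)"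
proof -
  obtain F' where F': "F' \<in> carrier_mat a a" "F * F' = 1\<^sub>m a" "F' * F = 1\<^sub>m a" using inv_ex[OF assms(2,1)] by blast
  obtain G' where G': "G' \<in> carrier_mat b b" "G * G' = 1\<^sub>m b" "G' * G = 1\<^sub>m b" using inv_ex[OF assms(4,3)] by blast
  show ?thesis
  proof (rule invertible_of[of _ "a+b" "four_block_mat F' (0\<^sub>m a b) (0\<^sub>m b a) G'"])
    show "four_block_mat F (0\<^sub>m a b) (0\<^sub>m b a) G \<in> carrier_mat (a + b) (a + b)" using assms by auto
    show "four_block_mat F' (0\<^sub>m a b) (0\<^sub>m b a) G' \<in> carrier_mat (a + b) (a + b)" using F' G' by auto
    show "four_block_mat F (0\<^sub>m a b) (0\<^sub>m b a) G * four_block_mat F' (0\<^sub>m a b) (0\<^sub>m b a) G' = 1\<^sub>m (a + b)"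
      by (subst mult_four_block_mat[of F a a _ b _ b G F' a _ b]) (use assms F' G' in auto)
    show "four_block_mat F' (0\<^sub>m a b) (0\<^sub>m b a) G' * four_block_mat F (0\<^sub>m a b) (0\<^sub>m b a) G = 1\<^sub>m (a + b)"
      by (subst mult_four_block_mat[of F' a a _ b _ b G' F a _ b]) (use assms F' G' in auto)
  qed
qed

lemma iso_cong:
  assumes cA: "carr m n S A" and cA': "carr m n S A'" and cB: "carr m n S B" and cB': "carr m n S B'"
    and iA: "rep_iso m n S A A'" and iB: "rep_iso m n S B B'"
  shows "rep_iso m n S (dsum2 A B) (dsum2 A' B')"
proof -
  obtain f where f: "\<forall>x\<in>S. f x \<in> carrier_mat (dimv A' x) (dimv A x) \<and> invertible_mat (f x)"
    "\<forall>x\<in>S. \<forall>y\<in>S. reach m n x y \<longrightarrow> f y * mapv A x y = mapv A' x y * f x"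
    using iA unfolding rep_iso_def by blast
  obtain g where g: "\<forall>x\<in>S. g x \<in> carrier_mat (dimv B' x) (dimv B x) \<and> invertible_mat (g x)"
    "\<forall>x\<in>S. \<forall>y\<in>S. reach m n x y \<longrightarrow> g y * mapv B x y = mapv B' x y * g x"
    using iB unfolding rep_iso_def by blast
  have dA: "\<And>x. x \<in> S \<Longrightarrow> dimv A' x = dimv A x" using iso_dim[OF iA] .
  have dB: "\<And>x. x \<in> S \<Longrightarrow> dimv B' x = dimv B x" using iso_dim[OF iB] .
  define h where "h x = four_block_mat (f x) (0\<^sub>m (dimv A x) (dimv B x)) (0\<^sub>m (dimv B x) (dimv A x)) (g x)" for x
  show ?thesis unfolding rep_iso_def
  proof (intro exI[of _ h] conjI ballI impI)
    fix x assume x: "x \<in> S"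
    have cf: "f x \<in> carrier_mat (dimv A x) (dimv A x)" and cg: "g x \<in> carrier_mat (dimv B x) (dimv B x)"
      using f g x dA dB by auto
    show "h x \<in> carrier_mat (dimv (dsum2 A' B') x) (dimv (dsum2 A B) x)"
      unfolding h_def using cf cg dA[OF x] dB[OF x] by auto
    show "invertible_mat (h x)" unfolding h_def using block_inv[OF cf _ cg] f g x by auto
  next
    fix x y assume xy: "x \<in> S" "y \<in> S" "reach m n x y"
    have cfx: "f x \<in> carrier_mat (dimv A x) (dimv A x)" and cgx: "g x \<in> carrier_mat (dimv B x) (dimv B x)"
      using f g xy dA dB by auto
    have cfy: "f y \<in> carrier_mat (dimv A y) (dimv A y)" and cgy: "g y \<in> carrier_mat (dimv B y) (dimv B y)"
      using f g xy dA dB by auto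
    have mA: "mapv A x y \<in> carrier_mat (dimv A y) (dimv A x)" using carrD[OF cA xy] .
    have mB: "mapv B x y \<in> carrier_mat (dimv B y) (dimv B x)" using carrD[OF cB xy] .
    have mA': "mapv A' x y \<in> carrier_mat (dimv A y) (dimv A x)" using carrD[OF cA' xy] dA xy by simp
    have mB': "mapv B' x y \<in> carrier_mat (dimv B y) (dimv B x)" using carrD[OF cB' xy] dB xy by simp
    have ef: "f y * mapv A x y = mapv A' x y * f x" using f xy by blast
    have eg: "g y * mapv B x y = mapv B' x y * g x" using g xy by blast
    have L: "h y * mapv (dsum2 A B) x y = four_block_mat (f y * mapv A x y) (0\<^sub>m (dimv A y) (dimv B x))
         (0\<^sub>m (dimv B y) (dimv A x)) (g y * mapv B x y)"
      unfolding h_def mapv_dsum2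
      by (subst mult_four_block_mat[OF cfy _ _ cgy mA _ _ mB]) (use cfy cgy mA mB in auto)
    have R: "mapv (dsum2 A' B') x y * h x = four_block_mat (mapv A' x y * f x) (0\<^sub>m (dimv A y) (dimv B x))
         (0\<^sub>m (dimv B y) (dimv A x)) (mapv B' x y * g x)"
      unfolding h_def mapv_dsum2 dA[OF xy(1)] dA[OF xy(2)] dB[OF xy(1)] dB[OF xy(2)]
      by (subst mult_four_block_mat[OF mA' _ _ mB' cfx _ _ cgx]) (use cfx cgx mA' mB' in auto)
    show "h y * mapv (dsum2 A B) x y = mapv (dsum2 A' B') x y * h x"
      unfolding L R ef eg ..
  qed
qed

lemma iso_append:
  assumes "\<forall>L\<in>set X. carr m n S L" "\<forall>L\<in>set Y. carr m n S L"
  shows "rep_iso m n S (dsum2 (dsum X) (dsum Y)) (dsum (X @ Y))"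
  using assms(1)
proof (induct X)
  case Nil
  then show ?case using iso_zero_left' carr_dsum[OF assms(2)] by simp
next
  case (Cons a X)
  have ca: "carr m n S a" and cX: "carr m n S (dsum X)" using Cons.prems carr_dsum by auto
  have cY: "carr m n S (dsum Y)" using carr_dsum[OF assms(2)] .
  have "\<forall>L\<in>set (X @ Y). carr m n S L" using Cons.prems assms(2) by auto
  then have cXY: "carr m n S (dsum (X @ Y))" by (rule carr_dsum)
  have 1: "rep_iso m n S (dsum2 (dsum2 a (dsum X)) (dsum Y)) (dsum2 a (dsum2 (dsum X) (dsum Y)))"
    by (rule iso_assoc[OF ca cX cY])
  have 2: "rep_iso m n S (dsum2 a (dsum2 (dsum X) (dsum Y))) (dsum2 a (dsum (X @ Y)))"
    by (rule iso_cong[OF ca ca carr_dsum2[OF cX cY] cXY])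
       (use Cons ca iso_eq[OF ca] in auto)
  show ?case
    using iso_trans[OF _ _ 1 2] ca cX cY cXY by (auto intro!: carr_dsum2)
qed



lemma indec_carr: "indecomposable m n S L \<Longrightarrow> carr m n S L"
  unfolding indecomposable_def using is_rep_carr by blast

lemma exist_decomp:
  assumes "finite S"
  shows "is_rep m n S (M :: 'k::field rep) \<Longrightarrow> \<exists>Ns. (\<forall>L\<in>set Ns. indecomposable m n S L) \<and> rep_iso m n S M (dsum Ns)"
proof (induct "\<Sum>x\<in>S. dimv M x" arbitrary: M rule: less_induct)
  case less
  note rM = less.prems
  have cM: "carr m n S M" using is_rep_carr[OF rM] .
  show ?case
  proof (cases "nonzero_rep S M")
    case False
    then have d0: "\<forall>x\<in>S. dimv M x = 0" unfolding nonzero_rep_def by auto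
    have "rep_iso m n S M (dsum [])"
    proof (simp, rule iso_eq[OF cM])
      show "\<forall>x\<in>S. dimv zero_rep x = dimv M x" using d0 by simp
      show "\<forall>x\<in>S. \<forall>y\<in>S. reach m n x y \<longrightarrow> mapv zero_rep x y = mapv M x y"
      proof (intro ballI impI)
        fix x y assume xy: "x \<in> S" "y \<in> S" "reach m n x y"
        then have "mapv M x y \<in> carrier_mat 0 0" using carrD[OF cM xy] d0 by simp
        then show "mapv zero_rep x y = mapv M x y" by (auto intro!: eq_matI)
      qed
    qed
    then show ?thesis by (intro exI[of _ "[]"]) simp
  next
    case nz: True
    show ?thesis
    proof (cases "indecomposable m n S M")
      case True
      then show ?thesis using iso_zero_right[OF cM] by (intro exI[of _ "[M]"]) simp
    next
      case False
      then obtain A B where AB: "is_rep m n S A" "is_rep m n S B" "nonzero_rep S A" "nonzero_rep S B"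
        "rep_iso m n S M (dsum2 A B)"
        using rM nz unfolding indecomposable_def by blast
      have dsum: "\<And>x. x \<in> S \<Longrightarrow> dimv M x = dimv A x + dimv B x" using iso_dim[OF AB(5)] by simp
      have sA: "(\<Sum>x\<in>S. dimv A x) < (\<Sum>x\<in>S. dimv M x)"
      proof -
        obtain b where b: "b \<in> S" "dimv B b \<noteq> 0" using AB(4) unfolding nonzero_rep_def by blast
        have "(\<Sum>x\<in>S. dimv A x) < (\<Sum>x\<in>S. dimv A x + dimv B x)"
          using b assms by (intro sum_strict_mono_ex1) auto
        then show ?thesis using dsum by simp
      qed
      have sB: "(\<Sum>x\<in>S. dimv B x) < (\<Sum>x\<in>S. dimv M x)"
      proof -
        obtain b where b: "b \<in> S" "dimv A b \<noteq> 0" using AB(3) unfolding nonzero_rep_def by blast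
        have "(\<Sum>x\<in>S. dimv B x) < (\<Sum>x\<in>S. dimv A x + dimv B x)"
          using b assms by (intro sum_strict_mono_ex1) auto
        then show ?thesis using dsum by simp
      qed
      obtain NA where NA: "\<forall>L\<in>set NA. indecomposable m n S L" "rep_iso m n S A (dsum NA)"
        using less.hyps[OF sA AB(1)] by blast
      obtain NB where NB: "\<forall>L\<in>set NB. indecomposable m n S L" "rep_iso m n S B (dsum NB)"
        using less.hyps[OF sB AB(2)] by blast
      have cNA: "\<forall>L\<in>set NA. carr m n S L" and cNB: "\<forall>L\<in>set NB. carr m n S L"
        using NA NB indec_carr by blast+
      have cA: "carr m n S A" and cB: "carr m n S B" using AB is_rep_carr by blast+
      have c1: "carr m n S (dsum2 A B)" using carr_dsum2[OF cA cB] .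
      have c2: "carr m n S (dsum2 (dsum NA) (dsum NB))" using carr_dsum2[OF carr_dsum[OF cNA] carr_dsum[OF cNB]] .
      have "\<forall>L\<in>set (NA @ NB). carr m n S L" using cNA cNB by auto
      then have c3: "carr m n S (dsum (NA @ NB))" by (rule carr_dsum)
      have i1: "rep_iso m n S (dsum2 A B) (dsum2 (dsum NA) (dsum NB))"
        by (rule iso_cong[OF cA carr_dsum[OF cNA] cB carr_dsum[OF cNB] NA(2) NB(2)])
      have i2: "rep_iso m n S (dsum2 (dsum NA) (dsum NB)) (dsum (NA @ NB))"
        by (rule iso_append[OF cNA cNB])
      have "rep_iso m n S M (dsum (NA @ NB))"
        using iso_trans[OF cM c1 AB(5) iso_trans[OF c1 c2 i1 i2 c3] c3] .
      then show ?thesis using NA NB by (intro exI[of _ "NA @ NB"]) auto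
    qed
  qed
qed



lemma reach_trans: "reach m n x y \<Longrightarrow> reach m n y z \<Longrightarrow> reach m n x z"
  unfolding reach_def by auto

lemma arrows_grid: "(x, y) \<in> arrows m n \<Longrightarrow> x \<in> grid m n \<and> y \<in> grid m n"
  unfolding arrows_def by auto

lemma arrow_reach: "(x, y) \<in> arrows m n \<Longrightarrow> reach m n x y"
  unfolding reach_def using arrows_grid by auto

lemma reach_refl: "x \<in> grid m n \<Longrightarrow> reach m n x x"
  unfolding reach_def by auto

lemma arrows_sum: "(x, y) \<in> arrows m n \<Longrightarrow> fst y + snd y = Suc (fst x + snd x)"
  unfolding arrows_def by auto

lemma grid_bound: "x \<in> grid m n \<Longrightarrow> fst x + snd x \<le> m + n"
  unfolding grid_def by auto

lemma source_ex:
  assumes "I \<subseteq> grid m n"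
  shows "v \<in> I \<Longrightarrow> \<exists>s\<in>I. \<not> (\<exists>y\<in>I. (y, s) \<in> arrows m n) \<and> reach m n s v"
proof (induct "fst v + snd v" arbitrary: v rule: less_induct)
  case less
  show ?case
  proof (cases "\<exists>y\<in>I. (y, v) \<in> arrows m n")
    case False
    then show ?thesis using less.prems assms reach_refl by blast
  next
    case True
    then obtain y where y: "y \<in> I" "(y, v) \<in> arrows m n" by blast
    have "fst y + snd y < fst v + snd v" using arrows_sum[OF y(2)] by simp
    then obtain s where "s\<in>I" "\<not> (\<exists>z\<in>I. (z, s) \<in> arrows m n)" "reach m n s y"
      using less.hyps y(1) by blast
    then show ?thesis using reach_trans arrow_reach[OF y(2)] by blast
  qed
qed

lemma sink_ex:
  assumes "I \<subseteq> grid m n"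
  shows "v \<in> I \<Longrightarrow> \<exists>t\<in>I. \<not> (\<exists>y\<in>I. (t, y) \<in> arrows m n) \<and> reach m n v t"
proof (induct "m + n - (fst v + snd v)" arbitrary: v rule: less_induct)
  case less
  show ?case
  proof (cases "\<exists>y\<in>I. (v, y) \<in> arrows m n")
    case False
    then show ?thesis using less.prems assms reach_refl by blast
  next
    case True
    then obtain y where y: "y \<in> I" "(v, y) \<in> arrows m n" by blast
    have "fst y + snd y \<le> m + n" using grid_bound arrows_grid[OF y(2)] by blast
    then have "m + n - (fst y + snd y) < m + n - (fst v + snd v)" using arrows_sum[OF y(2)] by simp
    then obtain t where "t\<in>I" "\<not> (\<exists>z\<in>I. (t, z) \<in> arrows m n)" "reach m n y t"
      using less.hyps y(1) by blast
    then show ?thesis using reach_trans arrow_reach[OF y(2)] by blast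
  qed
qed

lemma interval_grid: "is_interval m n I \<Longrightarrow> I \<subseteq> grid m n"
  unfolding is_interval_def by blast

lemma src_ss: "is_interval m n I \<Longrightarrow> v \<in> I \<Longrightarrow> \<exists>s\<in>sources_sinks m n I. reach m n s v"
  using source_ex[OF interval_grid] unfolding sources_sinks_def by blast

lemma snk_ss: "is_interval m n I \<Longrightarrow> v \<in> I \<Longrightarrow> \<exists>t\<in>sources_sinks m n I. reach m n v t"
  using sink_ex[OF interval_grid] unfolding sources_sinks_def by blast

lemma ss_sub: "sources_sinks m n I \<subseteq> I" unfolding sources_sinks_def by auto

lemma ss_sub_J:
  assumes "is_interval m n I" "is_interval m n J" "sources_sinks m n I \<subseteq> J"
  shows "I \<subseteq> J"
proof
  fix v assume v: "v \<in> I"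
  obtain s where s: "s \<in> sources_sinks m n I" "reach m n s v" using src_ss[OF assms(1) v] by blast
  obtain t where t: "t \<in> sources_sinks m n I" "reach m n v t" using snk_ss[OF assms(1) v] by blast
  show "v \<in> J" using assms(2) s t assms(3) unfolding is_interval_def by blast
qed

definition Rel :: "nat \<Rightarrow> nat \<Rightarrow> (nat \<times> nat) set \<Rightarrow> ((nat \<times> nat) \<times> (nat \<times> nat)) set" where
  "Rel m n S = {(x, y). x \<in> S \<and> y \<in> S \<and> (reach m n x y \<or> reach m n y x)}"

lemma connected_ess:
  assumes I: "is_interval m n I" and SS: "sources_sinks m n I \<subseteq> S" and SI: "S \<subseteq> I"
    and u: "u \<in> S" and v: "v \<in> S"
  shows "(u, v) \<in> (Rel m n S)\<^sup>*"
proof -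
  define src where "src x = (SOME s. s \<in> sources_sinks m n I \<and> reach m n s x)" for x
  have src: "src x \<in> sources_sinks m n I \<and> reach m n (src x) x" if "x \<in> I" for x
  proof -
    from src_ss[OF I that] obtain s where "s \<in> sources_sinks m n I \<and> reach m n s x" by blast
    then show ?thesis unfolding src_def by (rule someI)
  qed
  have toS: "(x, src x) \<in> Rel m n S" if "x \<in> S" for x
    using src[of x] that SI SS unfolding Rel_def by auto
  have sym: "(b, a) \<in> Rel m n S" if "(a, b) \<in> Rel m n S" for a b using that unfolding Rel_def by auto
  let ?E = "arrows m n \<inter> (I \<times> I)"
  have edge: "(src y, src z) \<in> (Rel m n S)\<^sup>*" if "(y, z) \<in> ?E" for y z
  proof -
    have yz: "y \<in> I" "z \<in> I" "(y, z) \<in> arrows m n" using that by auto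
    obtain t where t: "t \<in> sources_sinks m n I" "reach m n z t" using snk_ss[OF I yz(2)] by blast
    have "reach m n (src y) t" using src[OF yz(1)] arrow_reach[OF yz(3)] t(2) reach_trans by blast
    then have 1: "(src y, t) \<in> Rel m n S" using src[OF yz(1)] t SS unfolding Rel_def by auto
    have "reach m n (src z) t" using src[OF yz(2)] t(2) reach_trans by blast
    then have 2: "(t, src z) \<in> Rel m n S" using src[OF yz(2)] t SS unfolding Rel_def by auto
    show ?thesis using 1 2 by (meson converse_rtrancl_into_rtrancl r_into_rtrancl)
  qed
  have main: "(src x, src y) \<in> (Rel m n S)\<^sup>*" if "(x, y) \<in> (?E \<union> ?E\<inverse>)\<^sup>*" "x \<in> I" for x y
    using that(1)
  proof (induct rule: rtrancl_induct)
    case base then show ?case by simp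
  next
    case (step y z)
    have "(src y, src z) \<in> (Rel m n S)\<^sup>*"
    proof (cases "(y, z) \<in> ?E")
      case True then show ?thesis using edge by blast
    next
      case False
      then have "(z, y) \<in> ?E" using step(2) by blast
      then have "(src z, src y) \<in> (Rel m n S)\<^sup>*" using edge by blast
      then show ?thesis
      proof (induct rule: rtrancl_induct)
        case base then show ?case by simp
      next
        case (step a b)
        then show ?case using sym by (meson converse_rtrancl_into_rtrancl)
      qed
    qed
    then show ?case using step(3) by (meson rtrancl_trans)
  qed
  have "(u, v) \<in> (?E \<union> ?E\<inverse>)\<^sup>*" using I u v SI unfolding is_interval_def by blast
  then have "(src u, src v) \<in> (Rel m n S)\<^sup>*" using main u SI by blast
  moreover have "(u, src u) \<in> Rel m n S" using toS[OF u] .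
  moreover have "(src v, v) \<in> Rel m n S" using sym[OF toS[OF v]] .
  ultimately show ?thesis by (meson converse_rtrancl_into_rtrancl rtrancl.rtrancl_into_rtrancl)
qed

lemma ess_bounds: "sources_sinks m n I \<subseteq> ess_vertices m n st I \<and> ess_vertices m n st I \<subseteq> I"
  using ss_sub[of m n I] unfolding ess_vertices_def by (cases st) force+



lemma dimv_ir[simp]: "dimv (interval_rep J) x = (if x \<in> J then 1 else 0)"
  unfolding interval_rep_def by simp

lemma mapv_ir: "mapv (interval_rep J) x y = (if x \<in> J \<and> y \<in> J then 1\<^sub>m 1
                   else 0\<^sub>m (if y \<in> J then 1 else 0) (if x \<in> J then 1 else 0))"
  unfolding interval_rep_def by simp

lemma is_rep_interval:
  assumes J: "is_interval m n J"
  shows "is_rep m n S (interval_rep J :: 'k::field rep)"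
  unfolding is_rep_def
proof (intro conjI ballI impI)
  fix x assume "x \<in> S"
  show "mapv (interval_rep J) x x = (1\<^sub>m (dimv (interval_rep J :: 'k rep) x) :: 'k mat)"
    by (auto simp: mapv_ir one_zero_mat)
next
  fix x y assume "x \<in> S" "y \<in> S" "reach m n x y"
  show "mapv (interval_rep J) x y \<in> carrier_mat (dimv (interval_rep J :: 'k rep) y) (dimv (interval_rep J :: 'k rep) x)"
    by (auto simp: mapv_ir)
next
  fix x y z assume "x \<in> S" "y \<in> S" "z \<in> S" and r: "reach m n x y \<and> reach m n y z"
  have conv: "x \<in> J \<Longrightarrow> z \<in> J \<Longrightarrow> y \<in> J" using J r unfolding is_interval_def by blast
  show "mapv (interval_rep J) y z * mapv (interval_rep J) x y = (mapv (interval_rep J) x z :: 'k mat)"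
    using conv by (cases "x \<in> J"; cases "y \<in> J"; cases "z \<in> J") (auto simp: mapv_ir)
qed

lemma not_inv0: "\<not> invertible_mat (0\<^sub>m 1 1 :: 'k::field mat)"
proof
  assume inv: "invertible_mat (0\<^sub>m 1 1 :: 'k mat)"
  have "\<exists>B\<in>carrier_mat 1 1. (0\<^sub>m 1 1 :: 'k mat) * B = 1\<^sub>m 1 \<and> B * 0\<^sub>m 1 1 = 1\<^sub>m 1"
    by (rule inv_ex[OF inv]) simp
  then obtain B :: "'k mat" where B: "B \<in> carrier_mat 1 1" "0\<^sub>m 1 1 * B = 1\<^sub>m 1" by blast
  have "(0\<^sub>m 1 1 :: 'k mat) * B = 0\<^sub>m 1 1" using B(1) by simp
  then have e: "(0\<^sub>m 1 1 :: 'k mat) = 1\<^sub>m 1" using B(2) by simp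
  have "(0\<^sub>m 1 1 :: 'k mat) $$ (0,0) = (1\<^sub>m 1 :: 'k mat) $$ (0,0)" by (simp only: e)
  then show False by simp
qed

lemma indec_interval:
  assumes I: "is_interval m n I" and J: "is_interval m n J"
    and SS: "sources_sinks m n I \<subseteq> S" and SI: "S \<subseteq> I" and SJ: "S \<subseteq> J"
  shows "indecomposable m n S (interval_rep J :: 'k::field rep)"
proof -
  let ?M = "interval_rep J :: 'k rep"
  obtain v where v: "v \<in> I" using I unfolding is_interval_def by blast
  obtain s where s: "s \<in> sources_sinks m n I" using src_ss[OF I v] by blast
  have nz: "nonzero_rep S ?M" unfolding nonzero_rep_def using s SS SJ by auto
  have "\<not> (\<exists>A B. is_rep m n S A \<and> is_rep m n S B \<and> nonzero_rep S A \<and> nonzero_rep S B \<and>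
             rep_iso m n S ?M (dsum2 A B))"
  proof
    assume "\<exists>A B. is_rep m n S A \<and> is_rep m n S B \<and> nonzero_rep S A \<and> nonzero_rep S B \<and>
             rep_iso m n S ?M (dsum2 A B)"
    then obtain A B where AB: "is_rep m n S A" "is_rep m n S B" "nonzero_rep S A" "nonzero_rep S B"
      "rep_iso m n S ?M (dsum2 A B)" by blast
    obtain f where f: "\<forall>x\<in>S. f x \<in> carrier_mat (dimv (dsum2 A B) x) (dimv ?M x) \<and> invertible_mat (f x)"
      "\<forall>x\<in>S. \<forall>y\<in>S. reach m n x y \<longrightarrow> f y * mapv ?M x y = mapv (dsum2 A B) x y * f x"
      using AB(5) unfolding rep_iso_def by blast
    have d1: "dimv A x + dimv B x = 1" if "x \<in> S" for x
      using iso_dim[OF AB(5) that] that SJ by auto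
    have cf: "f x \<in> carrier_mat 1 1" if "x \<in> S" for x
    proof -
      have "x \<in> J" using that SJ by auto
      moreover have "f x \<in> carrier_mat (dimv A x + dimv B x) (dimv ?M x)" using f that by simp
      ultimately show ?thesis using d1[OF that] by simp
    qed
    let ?P = "{x \<in> S. dimv A x = 1}"
    have stepP: "z \<in> ?P" if yz: "(y, z) \<in> Rel m n S" and yP: "y \<in> ?P" for y z
    proof (rule ccontr)
      assume zP: "z \<notin> ?P"
      have yS: "y \<in> S" and zS: "z \<in> S" using yz unfolding Rel_def by auto
      have dy: "dimv A y = 1" "dimv B y = 0" using yP d1[OF yS] by auto
      have dz: "dimv A z = 0" "dimv B z = 1" using zP zS d1[OF zS] by auto
      have My: "y \<in> J" and Mz: "z \<in> J" using yS zS SJ by auto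
      have reach_cases: "reach m n y z \<or> reach m n z y" using yz unfolding Rel_def by auto
      then show False
      proof
        assume r: "reach m n y z"
        have cA: "mapv A y z \<in> carrier_mat 0 1" using carrD[OF is_rep_carr[OF AB(1)] yS zS r] dy dz by simp
        have cB: "mapv B y z \<in> carrier_mat 1 0" using carrD[OF is_rep_carr[OF AB(2)] yS zS r] dy dz by simp
        have D0: "mapv (dsum2 A B) y z = 0\<^sub>m 1 1"
          unfolding mapv_dsum2 dy dz using cA cB by (intro eq_matI) auto
        have "f z = f z * mapv ?M y z" using cf[OF zS] My Mz by (simp add: mapv_ir)
        also have "\<dots> = 0\<^sub>m 1 1 * f y" using f yS zS r D0 by auto
        also have "\<dots> = 0\<^sub>m 1 1" using cf[OF yS] by auto
        finally show False using f zS not_inv0 by metis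
      next
        assume r: "reach m n z y"
        have cA: "mapv A z y \<in> carrier_mat 1 0" using carrD[OF is_rep_carr[OF AB(1)] zS yS r] dy dz by simp
        have cB: "mapv B z y \<in> carrier_mat 0 1" using carrD[OF is_rep_carr[OF AB(2)] zS yS r] dy dz by simp
        have D0: "mapv (dsum2 A B) z y = 0\<^sub>m 1 1"
          unfolding mapv_dsum2 dy dz using cA cB by (intro eq_matI) auto
        have "f y = f y * mapv ?M z y" using cf[OF yS] My Mz by (simp add: mapv_ir)
        also have "\<dots> = 0\<^sub>m 1 1 * f z" using f yS zS r D0 by auto
        also have "\<dots> = 0\<^sub>m 1 1" using cf[OF zS] by auto
        finally show False using f yS not_inv0 by metis
      qed
    qed
    obtain a where a: "a \<in> S" "dimv A a \<noteq> 0" using AB(3) unfolding nonzero_rep_def by blast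
    obtain b where b: "b \<in> S" "dimv B b \<noteq> 0" using AB(4) unfolding nonzero_rep_def by blast
    have aP: "a \<in> ?P" using a d1[OF a(1)] by simp
    have "(a, b) \<in> (Rel m n S)\<^sup>*" using connected_ess[OF I SS SI a(1) b(1)] .
    then have "b \<in> ?P" using aP
    proof (induct rule: rtrancl_induct)
      case base then show ?case by simp
    next
      case (step y z) then show ?case using stepP by blast
    qed
    then show False using b d1[OF b(1)] by simp
  qed
  then show ?thesis unfolding indecomposable_def using is_rep_interval[OF J] nz by blast
qed



lemma finite_grid: "finite (grid m n)"
proof -
  have "grid m n \<subseteq> {1..m} \<times> {1..n}" unfolding grid_def by auto
  then show ?thesis by (rule finite_subset) simp
qed

lemma mem_le_sum_list: "L \<in> set Ns \<Longrightarrow> (f L :: nat) \<le> sum_list (map f Ns)"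
  by (induct Ns) auto

theorem mainTheorem9:
  fixes m n :: nat and I J :: "(nat \<times> nat) set" and st :: ess
  assumes "1 \<le> m" and "1 \<le> n"
    and "is_interval m n I" and "is_interval m n J"
  shows "compressed_mult m n st (interval_rep J :: ('k::field) rep) I = (if I \<subseteq> J then 1 else 0)"
proof -
  note Iint = assms(3) and Jint = assms(4)
  define S where "S = ess_vertices m n st I"
  let ?M = "interval_rep J :: 'k rep"
  let ?V = "interval_rep I :: 'k rep"
  have SS: "sources_sinks m n I \<subseteq> S" and SI: "S \<subseteq> I" using ess_bounds[of m n I st] unfolding S_def by simp_all
  have finS: "finite S" by (rule finite_subset[OF order_trans[OF SI interval_grid[OF Iint]] finite_grid])
  have rM: "is_rep m n S ?M" by (rule is_rep_interval[OF Jint])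
  have rV: "is_rep m n S ?V" by (rule is_rep_interval[OF Iint])
  have cM: "carr m n S ?M" and cV: "carr m n S ?V" using rM rV is_rep_carr by blast+
  have "I \<noteq> {}" using Iint unfolding is_interval_def by (elim conjE)
  then obtain v where v: "v \<in> I" by blast
  obtain s where s: "s \<in> sources_sinks m n I" using src_ss[OF Iint v] by blast
  have sS: "s \<in> S" using s SS by auto
  define P where "P k \<longleftrightarrow> (\<exists>Ns. (\<forall>L\<in>set Ns. indecomposable m n S L) \<and>
       rep_iso m n S ?M (dsum Ns) \<and> length (filter (\<lambda>L. rep_iso m n S L ?V) Ns) = k)" for k
  have cm: "compressed_mult m n st ?M I = (THE k. P k)"
    unfolding compressed_mult_def multiplicity_rep_def P_def S_def ..
  show ?thesis
  proof (cases "I \<subseteq> J")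
    case True
    have SJ: "S \<subseteq> J" using SI True by auto
    have indM: "indecomposable m n S ?M" by (rule indec_interval[OF Iint Jint SS SI SJ])
    have indV: "indecomposable m n S ?V" by (rule indec_interval[OF Iint Iint SS SI SI])
    have isoMV: "rep_iso m n S ?M ?V"
      by (rule iso_eq[OF cM]) (use SI SJ in \<open>auto simp: mapv_ir\<close>)
    have isoVV: "rep_iso m n S ?V ?V" by (rule iso_eq[OF cV]) auto
    have P1: "P 1"
    proof -
      have "rep_iso m n S ?M (dsum [?V])"
        using iso_trans[OF cM cV isoMV iso_zero_right[OF cV] carr_dsum2[OF cV carr_zero]] by simp
      then show ?thesis unfolding P_def using indV isoVV by (intro exI[of _ "[?V]"]) auto
    qed
    have uniq: "k = 1" if "P k" for k
    proof -
      obtain Ns where Ns: "\<forall>L\<in>set Ns. indecomposable m n S L" "rep_iso m n S ?M (dsum Ns)"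
        "length (filter (\<lambda>L. rep_iso m n S L ?V) Ns) = k" using \<open>P k\<close> unfolding P_def by blast
      show ?thesis
      proof (cases Ns)
        case Nil
        then have "dimv (dsum Ns) s = dimv ?M s" using iso_dim[OF Ns(2) sS] by simp
        then show ?thesis using Nil sS SJ by auto
      next
        case (Cons L rest)
        have indL: "indecomposable m n S L" using Ns Cons by auto
        have rest: "rest = []"
        proof (rule ccontr)
          assume "rest \<noteq> []"
          then obtain L2 rest2 where r2: "rest = L2 # rest2" by (cases rest) auto
          have indL2: "indecomposable m n S L2" using Ns Cons r2 by auto
          then obtain x where x: "x \<in> S" "dimv L2 x \<noteq> 0" unfolding indecomposable_def nonzero_rep_def by blast
          have "dimv (dsum rest) x \<noteq> 0" using x r2 by simp
          then have nzr: "nonzero_rep S (dsum rest)" using x unfolding nonzero_rep_def by blast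
          have "\<forall>L\<in>set rest. is_rep m n S L" using Ns(1) Cons unfolding indecomposable_def by auto
          then have "is_rep m n S (dsum rest)" by (rule is_rep_dsum)
          moreover have "is_rep m n S L" "nonzero_rep S L" using indL unfolding indecomposable_def by auto
          moreover have "rep_iso m n S ?M (dsum2 L (dsum rest))" using Ns(2) Cons by simp
          ultimately show False using indM nzr unfolding indecomposable_def by blast
        qed
        have cL: "carr m n S L" using indec_carr[OF indL] .
        have i1: "rep_iso m n S ?M (dsum2 L zero_rep)" using Ns(2) Cons rest by simp
        have i2: "rep_iso m n S ?M L"
          using iso_trans[OF cM carr_dsum2[OF cL carr_zero] i1 iso_zero_right'[OF cL] cL] .
        have i3: "rep_iso m n S L ?V" using iso_trans[OF cL cM iso_sym[OF cM cL i2] isoMV cV] .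
        show ?thesis using Ns(3) Cons rest i3 by simp
      qed
    qed
    have "(THE k. P k) = 1" using P1 uniq by (rule the_equality)
    then show ?thesis using cm True by simp
  next
    case False
    obtain x where x: "x \<in> S" "x \<notin> J"
    proof -
      have "\<not> S \<subseteq> J"
      proof
        assume "S \<subseteq> J"
        then have "I \<subseteq> J" using ss_sub_J[OF Iint Jint] SS by blast
        then show False using False by simp
      qed
      then show ?thesis using that by blast
    qed
    have P0: "P 0" if "P k" for k
    proof -
      obtain Ns where Ns: "\<forall>L\<in>set Ns. indecomposable m n S L" "rep_iso m n S ?M (dsum Ns)"
        using \<open>P k\<close> unfolding P_def by blast
      have "filter (\<lambda>L. rep_iso m n S L ?V) Ns = []"
      proof (rule ccontr)
        assume "filter (\<lambda>L. rep_iso m n S L ?V) Ns \<noteq> []"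
        then obtain L where L: "L \<in> set Ns" "rep_iso m n S L ?V" by (auto simp: filter_empty_conv)
        have "dimv L x = 1" using iso_dim[OF L(2) x(1)] x SI by auto
        moreover have "dimv L x \<le> dimv (dsum Ns) x" unfolding dim_dsum using L(1) by (rule mem_le_sum_list)
        moreover have "dimv (dsum Ns) x = 0" using iso_dim[OF Ns(2) x(1)] x by simp
        ultimately show False by simp
      qed
      then show ?thesis unfolding P_def using Ns by auto
    qed
    have uniq: "k = 0" if "P k" for k
    proof -
      obtain Ns where Ns: "\<forall>L\<in>set Ns. indecomposable m n S L" "rep_iso m n S ?M (dsum Ns)"
        "length (filter (\<lambda>L. rep_iso m n S L ?V) Ns) = k" using \<open>P k\<close> unfolding P_def by blast
      have "filter (\<lambda>L. rep_iso m n S L ?V) Ns = []"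
      proof (rule ccontr)
        assume "filter (\<lambda>L. rep_iso m n S L ?V) Ns \<noteq> []"
        then obtain L where L: "L \<in> set Ns" "rep_iso m n S L ?V" by (auto simp: filter_empty_conv)
        have "dimv L x = 1" using iso_dim[OF L(2) x(1)] x SI by auto
        moreover have "dimv L x \<le> dimv (dsum Ns) x" unfolding dim_dsum using L(1) by (rule mem_le_sum_list)
        moreover have "dimv (dsum Ns) x = 0" using iso_dim[OF Ns(2) x(1)] x by simp
        ultimately show False by simp
      qed
      then show ?thesis using Ns(3) by simp
    qed
    obtain Ns where Ns: "\<forall>L\<in>set Ns. indecomposable m n S L" "rep_iso m n S ?M (dsum Ns)"
      using exist_decomp[OF finS rM] by blast
    have "P (length (filter (\<lambda>L. rep_iso m n S L ?V) Ns))" unfolding P_def using Ns by blast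
    then have "P 0" by (rule P0)
    then have "(THE k. P k) = 0" using uniq by (rule the_equality)
    then show ?thesis using cm False by simp
  qed
qed

end
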